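(* Let $r>0$, $\kappa>0$, $\tau>0$ and $p\in[0,1]$ be fixed, with $\varepsilon=pe^{-\tau}<1$, and set \[ q_c:=1-\frac{1}{r}\,\frac{1}{1-\varepsilon}. \] For $q\in\mathbb{R}$ let $u(q)=(1-q,0,q)$ and consider the disease-free equilibrium $\widehat{u(q)}$ of the SIQ system, whose eigenvalues are the roots (counted with multiplicity as zeros of an analytic function) of \[ \chi_q(\lambda)=\lambda\Big(\lambda+1-r(1-q)\big(1-\varepsilon e^{-\tau\lambda}\big)\Big). \] If $q\ge q_c$, then $\widehat{u(q)}$ is linearly stable, and if $q<q_c$, then $\widehat{u(q)}$ is linearly unstable. In more detail: for $q\ne q_c$ the eigenvalue $\lambda=0$ has multiplicity $1$ and there is no other eigenvalue on the imaginary axis; for $q\ge q_c$ all nonzero eigenvalues $\lambda$ satisfy $\mathrm{Re}(\lambda)<0$; for $q<q_c$ there is exactly one eigenvalue $\lambda_1$ with $\mathrm{Re}(\lambda_1)>0$.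
   Context: The SIQ system is \[ \dot S(t)=-rS(t)I(t)+I(t)+r\varepsilon S(t-\tau-\kappa)I(t-\tau-\kappa),\quad \dot I(t)=rS(t)I(t)-I(t)-r\varepsilon S(t-\tau)I(t-\tau), \] \[ \dot Q(t)=r\varepsilon\big[S(t-\tau)I(t-\tau)-S(t-\tau-\kappa)I(t-\tau-\kappa)\big], \] with $\varepsilon=pe^{-\tau}$, considered on continuous histories on $[-\tau-\kappa,0]$ with $S+I+Q\equiv1$. For $u\in\mathbb{R}^3$, $\hat u$ is the constant function with value $u$. The function $\chi_q$ is the characteristic function of the linearization at $\widehat{u(q)}$. An equilibrium on this line of equilibria is called linearly stable if all eigenvalues other than $\lambda=0$ have negative real part, and linearly unstable if some eigenvalue has positive real part. *)

theory Defs
  imports "HOL-Complex_Analysis.Complex_Analysis"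
begin

definition siq_eps :: "real \<Rightarrow> real \<Rightarrow> real" where
  "siq_eps p \<tau> = p * exp (- \<tau>)"

definition siq_qc :: "real \<Rightarrow> real \<Rightarrow> real \<Rightarrow> real" where
  "siq_qc r p \<tau> = 1 - (1 / r) * (1 / (1 - siq_eps p \<tau>))"

definition siq_chi :: "real \<Rightarrow> real \<Rightarrow> real \<Rightarrow> real \<Rightarrow> complex \<Rightarrow> complex" where
  "siq_chi r p \<tau> q lam =
     lam * (lam + 1 - of_real (r * (1 - q)) *
           (1 - of_real (siq_eps p \<tau>) * exp (- of_real \<tau> * lam)))"

definition lin_stable :: "(complex \<Rightarrow> complex) \<Rightarrow> bool" where
  "lin_stable chi \<longleftrightarrow> (\<forall>lam. chi lam = 0 \<and> lam \<noteq> 0 \<longrightarrow> Re lam < 0)"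

definition lin_unstable :: "(complex \<Rightarrow> complex) \<Rightarrow> bool" where
  "lin_unstable chi \<longleftrightarrow> (\<exists>lam. chi lam = 0 \<and> Re lam > 0)"

end

theory Submission
  imports Defs
begin

definition G :: "real \<Rightarrow> real \<Rightarrow> real \<Rightarrow> complex \<Rightarrow> complex" where
  "G A B \<tau> z = z - of_real A + of_real B * exp (- of_real \<tau> * z)"

lemma chi_eq: "siq_chi r p \<tau> q z = z * G (r*(1-q) - 1) (r*(1-q) * siq_eps p \<tau>) \<tau> z"
  by (simp add: siq_chi_def G_def algebra_simps)

lemma parts:
  assumes "G A B \<tau> z = 0"
  shows "Re z - A + B * exp (- \<tau> * Re z) * cos (\<tau> * Im z) = 0"
    and "Im z = B * exp (- \<tau> * Re z) * sin (\<tau> * Im z)"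
proof -
  have "Re (G A B \<tau> z) = 0" "Im (G A B \<tau> z) = 0" using assms by auto
  then show "Re z - A + B * exp (- \<tau> * Re z) * cos (\<tau> * Im z) = 0"
    and "Im z = B * exp (- \<tau> * Re z) * sin (\<tau> * Im z)"
    by (auto simp: G_def Re_exp Im_exp)
qed

lemma modulus:
  assumes "G A B \<tau> z = 0"
  shows "\<bar>Re z - A\<bar> \<le> \<bar>B\<bar> * exp (- \<tau> * Re z)"
proof -
  have "z - of_real A = - (of_real B * exp (- of_real \<tau> * z))"
    using assms by (simp add: G_def algebra_simps)
  then have "cmod (z - of_real A) = \<bar>B\<bar> * exp (- \<tau> * Re z)"
    by (simp add: norm_mult)
  moreover have "\<bar>Re (z - of_real A)\<bar> \<le> cmod (z - of_real A)" by (rule abs_Re_le_cmod)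
  ultimately show ?thesis by simp
qed

lemma G_real: "G A B \<tau> (of_real x) = of_real (x - A + B * exp (- \<tau> * x))"
proof -
  have "exp (- (of_real \<tau> * of_real x)) = (of_real (exp (- (\<tau> * x))) :: complex)"
    by (metis exp_of_real of_real_minus of_real_mult)
  then show ?thesis by (simp add: G_def)
qed

lemma deriv_chi:
  "((\<lambda>z. z * G A B \<tau> z) has_field_derivative (G A B \<tau> z + z * (1 - of_real B * of_real \<tau> * exp (- of_real \<tau> * z)))) (at z)"
  unfolding G_def
  by (rule derivative_eq_intros refl | simp)+

lemma stable_pos:
  assumes "\<tau> > 0" "B \<ge> 0" "B * \<tau> < 1" "A \<le> B" "G A B \<tau> z = 0" "Re z \<ge> 0"
  shows "z = 0"
proof -
  let ?x = "Re z" and ?y = "Im z"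
  have y: "?y = B * exp (- \<tau> * ?x) * sin (\<tau> * ?y)" using parts(2)[OF assms(5)] .
  have e1: "exp (- \<tau> * ?x) \<le> 1" using assms by simp
  have "\<bar>?y\<bar> = B * exp (- \<tau> * ?x) * \<bar>sin (\<tau> * ?y)\<bar>"
    using y assms by (metis abs_mult abs_of_nonneg exp_ge_zero mult_nonneg_nonneg)
  also have "\<dots> \<le> B * 1 * (\<tau> * \<bar>?y\<bar>)"
    using abs_sin_x_le_abs_x[of "\<tau> * ?y"] assms e1
    by (intro mult_mono) (auto simp: abs_mult)
  finally have "\<bar>?y\<bar> \<le> (B * \<tau>) * \<bar>?y\<bar>" by simp
  then have "(1 - B * \<tau>) * \<bar>?y\<bar> \<le> 0" by (simp add: algebra_simps)
  then have "\<bar>?y\<bar> \<le> 0" using assms(3) by (simp add: mult_le_0_iff)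
  then have y0: "?y = 0" by simp
  have x: "?x - A + B * exp (- \<tau> * ?x) = 0" using parts(1)[OF assms(5)] y0 by simp
  have "exp (- \<tau> * ?x) \<ge> 1 + (- \<tau> * ?x)" by (rule exp_ge_add_one_self)
  then have "B * exp (- \<tau> * ?x) \<ge> B * (1 - \<tau> * ?x)" using assms by (intro mult_left_mono) auto
  with x have "?x * (1 - B * \<tau>) \<le> A - B" by (simp add: algebra_simps)
  with assms have "?x * (1 - B * \<tau>) \<le> 0" by linarith
  with assms have "?x = 0"
    by (smt (verit) mult_pos_pos)
  with y0 show ?thesis by (simp add: complex_eq_iff)
qed

lemma neg_case:
  assumes "\<tau> > 0" "B \<le> 0" "A < B" "G A B \<tau> z = 0"
  shows "Re z < 0"
proof (rule ccontr)
  assume "\<not> Re z < 0"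
  then have x: "Re z \<ge> 0" by simp
  have "\<bar>Re z - A\<bar> \<le> \<bar>B\<bar> * exp (- \<tau> * Re z)" by (rule modulus[OF assms(4)])
  also have "\<dots> \<le> \<bar>B\<bar> * 1" using x assms by (intro mult_left_mono) auto
  finally show False using assms x by linarith
qed

lemma unstable_real:
  assumes "\<tau> > 0" "B \<ge> 0" "B < A" "G A B \<tau> z = 0" "Re z \<ge> 0"
  shows "Im z = 0"
proof (rule ccontr)
  assume yn: "Im z \<noteq> 0"
  let ?x = "Re z" and ?y = "Im z"
  define w where "w = B * exp (- \<tau> * ?x)"
  have w0: "w \<ge> 0" using assms by (simp add: w_def)
  have y: "?y = w * sin (\<tau> * ?y)" using parts(2)[OF assms(4)] by (simp add: w_def)
  have "\<bar>?y\<bar> = w * \<bar>sin (\<tau> * ?y)\<bar>" using y w0 by (metis abs_mult abs_of_nonneg)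
  also have "\<dots> \<le> w * (\<tau> * \<bar>?y\<bar>)"
    using abs_sin_x_le_abs_x[of "\<tau> * ?y"] assms w0 by (intro mult_left_mono) (auto simp: abs_mult)
  finally have "1 * \<bar>?y\<bar> \<le> (w * \<tau>) * \<bar>?y\<bar>" by simp
  then have wt: "w * \<tau> \<ge> 1" using yn by (simp add: mult_le_cancel_right)
  have "\<bar>?x - A\<bar> \<le> w" using modulus[OF assms(4)] assms by (simp add: w_def)
  then have xa: "?x \<ge> A - w" by linarith
  have Bw: "B = w * exp (\<tau> * ?x)" by (simp add: w_def mult_exp_exp)
  have "exp (\<tau> * ?x) \<ge> 1 + \<tau> * ?x" by (rule exp_ge_add_one_self)
  then have "B \<ge> w * (1 + \<tau> * ?x)" using Bw w0 by (simp add: mult_left_mono)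
  moreover have "w * (\<tau> * ?x) \<ge> 1 * ?x" using wt assms(5)
    by (metis mult.assoc mult_right_mono)
  ultimately show False using xa assms by (simp add: algebra_simps)
qed

lemma real_unique:
  fixes A B \<tau> x1 x2 :: real
  assumes "\<tau> > 0" "B \<ge> 0" "B < A" "x1 > 0" "x2 > 0"
    "x1 - A + B * exp (- \<tau> * x1) = 0" "x2 - A + B * exp (- \<tau> * x2) = 0"
  shows "x1 = x2"
proof -
  have key: False if "0 < u" "u < v" "u - A + B * exp (- \<tau> * u) = 0" "v - A + B * exp (- \<tau> * v) = 0" for u v :: real
  proof -
    define t where "t = u / v"
    have t: "0 < t" "t < 1" using that by (auto simp: t_def)
    have u: "u = t * v" using that by (simp add: t_def)
    have "exp ((1 - t) * 0 + t * (- \<tau> * v)) \<le> (1 - t) * exp 0 + t * exp (- \<tau> * v)"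
      using convex_onD[OF exp_convex, of t 0 "- \<tau> * v"] t by simp
    then have "exp (- \<tau> * u) \<le> (1 - t) + t * exp (- \<tau> * v)" by (simp add: u algebra_simps)
    then have "B * exp (- \<tau> * u) \<le> B * ((1 - t) + t * exp (- \<tau> * v))" using assms by (simp add: mult_left_mono)
    then have "0 \<le> t * (v - A + B * exp (- \<tau> * v)) + (1 - t) * (B - A)"
      using that(3) u by (simp add: algebra_simps)
    then have "0 \<le> (1 - t) * (B - A)" using that(4) by simp
    moreover have "(1 - t) * (B - A) < 0" using t assms by (simp add: mult_pos_neg)
    ultimately show False by simp
  qed
  show ?thesis using key[of x1 x2] key[of x2 x1] assms by (metis linorder_neqE_linordered_idom)
qed

lemma real_exists:
  fixes A B \<tau> :: real
  assumes "\<tau> > 0" "B \<ge> 0" "B < A"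
  shows "\<exists>x>0. x - A + B * exp (- \<tau> * x) = 0"
proof -
  let ?f = "\<lambda>x. x - A + B * exp (- \<tau> * x)"
  have "?f 0 \<le> 0" using assms by simp
  moreover have "0 \<le> ?f A" using assms by simp
  moreover have "0 \<le> A" using assms by simp
  moreover have "\<forall>x. 0 \<le> x \<and> x \<le> A \<longrightarrow> isCont ?f x" by (auto intro!: continuous_intros)
  ultimately obtain x where x: "0 \<le> x" "x \<le> A" "?f x = 0" using IVT[of ?f 0 0 A] by blast
  moreover have "x \<noteq> 0" using x assms by auto
  ultimately show ?thesis by (intro exI[of _ x]) auto
qed

lemma simple_root:
  fixes A B \<tau> x :: real
  assumes "\<tau> > 0" "B \<ge> 0" "B < A" "x > 0" "x - A + B * exp (- \<tau> * x) = 0"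
  shows "1 - B * \<tau> * exp (- \<tau> * x) \<noteq> 0"
proof
  assume h: "1 - B * \<tau> * exp (- \<tau> * x) = 0"
  define w where "w = B * exp (- \<tau> * x)"
  have wt: "w * \<tau> = 1" using h unfolding w_def by (simp add: algebra_simps)
  have w0: "w \<ge> 0" using assms by (simp add: w_def)
  have Bw: "B = w * exp (\<tau> * x)" by (simp add: w_def mult_exp_exp)
  have "exp (\<tau> * x) \<ge> 1 + \<tau> * x" by (rule exp_ge_add_one_self)
  then have "B \<ge> w * (1 + \<tau> * x)" using Bw w0 by (simp add: mult_left_mono)
  moreover have "w * (1 + \<tau> * x) = w + (w * \<tau>) * x" by (simp add: algebra_simps)
  ultimately have "B \<ge> w + x" using wt by simp
  moreover have "x + w = A" using assms by (simp add: w_def)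
  ultimately show False using assms by simp
qed

lemma exp_strict: assumes "(t::real) > 0" shows "1 + t < exp t"
proof -
  have "exp t = exp (t/2) * exp (t/2)" by (simp flip: exp_add)
  also have "\<dots> \<ge> (1 + t/2) * (1 + t/2)"
    using exp_ge_add_one_self[of "t/2"] assms by (intro mult_mono) auto
  moreover have "(1 + t/2) * (1 + t/2) = 1 + t + t*t/4" by (simp add: algebra_simps)
  moreover have "t * t > 0" using assms by simp
  ultimately show ?thesis by linarith
qed

lemma eps_tau:
  assumes "\<tau> > 0" "0 \<le> p" "p \<le> 1"
  shows "siq_eps p \<tau> * \<tau> < 1 - siq_eps p \<tau>"
proof -
  have e: "siq_eps p \<tau> \<le> exp (- \<tau>)" using assms by (simp add: siq_eps_def mult_left_le_one_le)
  have "1 + \<tau> < exp \<tau>" by (rule exp_strict) fact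
  then have "(1 + \<tau>) * exp (- \<tau>) < exp \<tau> * exp (- \<tau>)" by simp
  then have "exp (- \<tau>) * \<tau> < 1 - exp (- \<tau>)" by (simp add: algebra_simps flip: exp_add)
  moreover have "siq_eps p \<tau> * \<tau> \<le> exp (- \<tau>) * \<tau>" using e assms by simp
  ultimately show ?thesis using e by linarith
qed

theorem theorem3:
  fixes r \<kappa> \<tau> p :: real
  assumes "r > 0" and "\<kappa> > 0" and "\<tau> > 0" and "0 \<le> p" and "p \<le> 1"
    and "siq_eps p \<tau> < 1"
  shows "\<forall>q::real.
     (q \<ge> siq_qc r p \<tau> \<longrightarrow> lin_stable (siq_chi r p \<tau> q)) \<and>
     (q < siq_qc r p \<tau> \<longrightarrow> lin_unstable (siq_chi r p \<tau> q)) \<and>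
     (q \<noteq> siq_qc r p \<tau> \<longrightarrow>
        zorder (siq_chi r p \<tau> q) 0 = 1 \<and>
        (\<forall>lam. siq_chi r p \<tau> q lam = 0 \<and> Re lam = 0 \<longrightarrow> lam = 0)) \<and>
     (q \<ge> siq_qc r p \<tau> \<longrightarrow>
        (\<forall>lam. siq_chi r p \<tau> q lam = 0 \<and> lam \<noteq> 0 \<longrightarrow> Re lam < 0)) \<and>
     (q < siq_qc r p \<tau> \<longrightarrow>
        (\<exists>lam1. siq_chi r p \<tau> q lam1 = 0 \<and> Re lam1 > 0 \<and>
               zorder (siq_chi r p \<tau> q) lam1 = 1 \<and>
               (\<forall>\<mu>. siq_chi r p \<tau> q \<mu> = 0 \<and> Re \<mu> > 0 \<longrightarrow> \<mu> = lam1)))"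
proof (intro allI)
  fix q :: real
  define e where "e = siq_eps p \<tau>"
  define a where "a = r * (1 - q)"
  define A where "A = a - 1"
  define B where "B = a * e"
  have e0: "e \<ge> 0" using assms by (simp add: e_def siq_eps_def)
  have e1: "e < 1" using assms by (simp add: e_def)
  have chi: "siq_chi r p \<tau> q = (\<lambda>z. z * G A B \<tau> z)"
    by (rule ext) (simp add: chi_eq A_def B_def a_def e_def)
  have roots: "G A B \<tau> z = 0" if "siq_chi r p \<tau> q z = 0" "z \<noteq> 0" for z
    using that by (simp add: chi)
  have qc: "siq_qc r p \<tau> \<le> q \<longleftrightarrow> a * (1 - e) \<le> 1"
  proof -
    have "siq_qc r p \<tau> \<le> q \<longleftrightarrow> 1 - q \<le> 1 / (r * (1 - e))"
      by (simp add: siq_qc_def e_def) linarith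
    also have "\<dots> \<longleftrightarrow> (1 - q) * (r * (1 - e)) \<le> 1"
      using assms e1 by (simp add: le_divide_eq)
    finally show ?thesis by (simp add: a_def algebra_simps)
  qed
  have qc2: "q \<noteq> siq_qc r p \<tau> \<longleftrightarrow> a * (1 - e) \<noteq> 1"
  proof -
    have "q = siq_qc r p \<tau> \<longleftrightarrow> 1 - q = 1 / (r * (1 - e))"
      by (auto simp add: siq_qc_def e_def)
    also have "\<dots> \<longleftrightarrow> (1 - q) * (r * (1 - e)) = 1"
      using assms e1 by (simp add: eq_divide_eq)
    finally show ?thesis by (simp add: a_def algebra_simps)
  qed
  have AB: "A - B = a * (1 - e) - 1" by (simp add: A_def B_def algebra_simps)
  have S: "\<forall>lam. siq_chi r p \<tau> q lam = 0 \<and> lam \<noteq> 0 \<longrightarrow> Re lam < 0" if st: "a * (1 - e) \<le> 1"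
  proof (intro allI impI)
    fix lam assume h: "siq_chi r p \<tau> q lam = 0 \<and> lam \<noteq> 0"
    then have g: "G A B \<tau> lam = 0" using roots by blast
    show "Re lam < 0"
    proof (cases "a \<le> 0")
      case True
      have "B \<le> 0" using True e0 by (simp add: B_def mult_nonpos_nonneg)
      moreover have "a * (1 - e) \<le> 0" using True e1 by (intro mult_nonpos_nonneg) auto
      then have "A < B" using AB by linarith
      ultimately show ?thesis using neg_case[OF assms(3) _ _ g] by blast
    next
      case False
      have B0: "B \<ge> 0" using False e0 by (simp add: B_def)
      have "a \<le> 1 / (1 - e)" using st e1 by (simp add: le_divide_eq)
      then have "a * (e * \<tau>) \<le> (1 / (1 - e)) * (e * \<tau>)"
        using e0 assms(3) by (intro mult_right_mono) auto
      then have "B * \<tau> \<le> (1 / (1 - e)) * (e * \<tau>)" unfolding B_def by (simp add: mult.assoc)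
      also have "\<dots> < 1" using eps_tau[OF assms(3,4,5)] e1 by (simp add: e_def)
      finally have "B * \<tau> < 1" .
      moreover have "A \<le> B" using AB st by simp
      ultimately show ?thesis using stable_pos[OF assms(3) B0 _ _ g] h by force
    qed
  qed
  have U: "B \<ge> 0 \<and> B < A" if un: "\<not> a * (1 - e) \<le> 1"
  proof -
    have "a > 0"
    proof (rule ccontr)
      assume "\<not> a > 0"
      then have "a * (1 - e) \<le> 0" using e1 by (intro mult_nonpos_nonneg) auto
      then show False using un by linarith
    qed
    then show ?thesis using e0 AB un by (simp add: B_def)
  qed
  have I: "\<forall>lam. siq_chi r p \<tau> q lam = 0 \<and> Re lam = 0 \<longrightarrow> lam = 0"
  proof (intro allI impI)
    fix lam assume h: "siq_chi r p \<tau> q lam = 0 \<and> Re lam = 0"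
    show "lam = 0"
    proof (rule ccontr)
      assume nz: "lam \<noteq> 0"
      show False
      proof (cases "a * (1 - e) \<le> 1")
        case True then show False using S h nz by force
      next
        case False
        have "Im lam = 0" using unstable_real[OF assms(3) _ _ roots] U[OF False] h nz by force
        then show False using h nz by (simp add: complex_eq_iff)
      qed
    qed
  qed
  have hol: "G A B \<tau> holomorphic_on UNIV" unfolding G_def by (intro holomorphic_intros)
  have Z0: "zorder (siq_chi r p \<tau> q) 0 = 1" if "a * (1 - e) \<noteq> 1"
  proof -
    have "G A B \<tau> 0 \<noteq> 0" using that AB by (simp add: G_def)
    then show ?thesis unfolding chi
      by (intro simple_zeroI[OF open_UNIV UNIV_I hol]) auto
  qed
  have UN: "\<exists>lam1. siq_chi r p \<tau> q lam1 = 0 \<and> Re lam1 > 0 \<and>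
               zorder (siq_chi r p \<tau> q) lam1 = 1 \<and>
               (\<forall>\<mu>. siq_chi r p \<tau> q \<mu> = 0 \<and> Re \<mu> > 0 \<longrightarrow> \<mu> = lam1)"
    if un: "\<not> a * (1 - e) \<le> 1"
  proof -
    have B0: "B \<ge> 0" and BA: "B < A" using U[OF un] by auto
    obtain x1 where x1: "x1 > 0" "x1 - A + B * exp (- \<tau> * x1) = 0"
      using real_exists[OF assms(3) B0 BA] by blast
    have g1: "G A B \<tau> (of_real x1) = 0" using x1 by (simp add: G_real)
    have c1: "siq_chi r p \<tau> q (of_real x1) = 0" by (simp add: chi g1)
    have uniq: "\<mu> = of_real x1" if "siq_chi r p \<tau> q \<mu> = 0 \<and> Re \<mu> > 0" for \<mu>
    proof -
      have nz: "\<mu> \<noteq> 0" using that by auto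
      have g: "G A B \<tau> \<mu> = 0" using roots that nz by blast
      have "Im \<mu> = 0" using unstable_real[OF assms(3) B0 BA g] that by simp
      then have m: "\<mu> = of_real (Re \<mu>)" by (simp add: complex_eq_iff)
      have "of_real (Re \<mu> - A + B * exp (- \<tau> * Re \<mu>)) = (0::complex)"
        using g by (subst (asm) m) (simp add: G_real)
      then have "Re \<mu> - A + B * exp (- \<tau> * Re \<mu>) = 0" by (simp only: of_real_eq_0_iff)
      then have "Re \<mu> = x1" using real_unique[OF assms(3) B0 BA _ x1(1) _ x1(2)] that by blast
      then show ?thesis using m by simp
    qed
    have d: "deriv (siq_chi r p \<tau> q) (of_real x1) = of_real (x1 * (1 - B * \<tau> * exp (- \<tau> * x1)))"
    proof -
      have "deriv (siq_chi r p \<tau> q) (of_real x1) = G A B \<tau> (of_real x1) + of_real x1 * (1 - of_real B * of_real \<tau> * exp (- of_real \<tau> * of_real x1))"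
        unfolding chi by (rule DERIV_imp_deriv[OF deriv_chi])
      also have "\<dots> = of_real (x1 * (1 - B * \<tau> * exp (- \<tau> * x1)))"
        using g1 by (simp flip: exp_of_real)
      finally show ?thesis .
    qed
    have dn: "deriv (siq_chi r p \<tau> q) (of_real x1) \<noteq> 0"
      unfolding d using simple_root[OF assms(3) B0 BA x1] x1(1) by (simp only: of_real_eq_0_iff) simp
    have hc: "siq_chi r p \<tau> q holomorphic_on UNIV" unfolding chi G_def by (intro holomorphic_intros)
    have z1: "zorder (siq_chi r p \<tau> q) (of_real x1) = 1"
      by (rule zorder_zero_eqI[OF hc open_UNIV UNIV_I]) (use c1 dn in auto)
    show ?thesis using c1 x1 z1 uniq by (intro exI[of _ "of_real x1"]) auto
  qed
  show "(q \<ge> siq_qc r p \<tau> \<longrightarrow> lin_stable (siq_chi r p \<tau> q)) \<and>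
     (q < siq_qc r p \<tau> \<longrightarrow> lin_unstable (siq_chi r p \<tau> q)) \<and>
     (q \<noteq> siq_qc r p \<tau> \<longrightarrow>
        zorder (siq_chi r p \<tau> q) 0 = 1 \<and>
        (\<forall>lam. siq_chi r p \<tau> q lam = 0 \<and> Re lam = 0 \<longrightarrow> lam = 0)) \<and>
     (q \<ge> siq_qc r p \<tau> \<longrightarrow>
        (\<forall>lam. siq_chi r p \<tau> q lam = 0 \<and> lam \<noteq> 0 \<longrightarrow> Re lam < 0)) \<and>
     (q < siq_qc r p \<tau> \<longrightarrow>
        (\<exists>lam1. siq_chi r p \<tau> q lam1 = 0 \<and> Re lam1 > 0 \<and>
               zorder (siq_chi r p \<tau> q) lam1 = 1 \<and>
               (\<forall>\<mu>. siq_chi r p \<tau> q \<mu> = 0 \<and> Re \<mu> > 0 \<longrightarrow> \<mu> = lam1)))"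
  proof (cases "a * (1 - e) \<le> 1")
    case True
    then have "q \<ge> siq_qc r p \<tau>" using qc by simp
    moreover have "a * (1 - e) \<noteq> 1 \<Longrightarrow> zorder (siq_chi r p \<tau> q) 0 = 1" using Z0 by blast
    ultimately show ?thesis using S[OF True] I qc2 unfolding lin_stable_def by auto
  next
    case False
    then have "\<not> q \<ge> siq_qc r p \<tau>" "a * (1 - e) \<noteq> 1" using qc by auto
    then show ?thesis using UN[OF False] I Z0 qc2 unfolding lin_unstable_def by auto
  qed
qed

end
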